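(* Let $\mathcal{O}=(O_1,\ldots,O_n)$ be a chain with $n\ge 2$, and let $\mathcal{O}_{1,n-1}=(O_1,\ldots,O_{n-1})$. Then $\Phi_{\mathcal{O}}\le\Phi_{\mathcal{O}_{1,n-1}}$, where for a chain $\mathcal{Q}=(O_1,\ldots,O_m)$, $\Phi_{\mathcal{Q}}=\varphi(r_m-r_1)-\frac{\varphi}{3}\sum_{i=2}^m(2H_i+V_i)$ with $\varphi=\frac{3}{\sqrt5}(1-1.8/1.998)$.
   Context: All objects lie in the Euclidean plane; a "circle" means a closed disk. Chain. A sequence of distinct finite closed disks $(O_1,\ldots,O_n)$ is a chain if: (1) every two consecutive disks $O_i,O_{i+1}$ intersect; let $a_i,b_i$ be the common points of their boundary circles ($a_i=b_i$ if tangent), labelled so that all the $a_i$ lie on one side of the chain and all the $b_i$ on the other. Let $C_i^{(i+1)}$ be the arc of the boundary of $O_i$ lying in $O_{i+1}$ and $C_{i+1}^{(i)}$ the arc of the boundary of $O_{i+1}$ lying in $O_i$. (2) For $2\le i\le n-1$, the arcs $C_i^{(i-1)}$ and $C_i^{(i+1)}$ share no point other than a boundary point. $r_i$ is the radius and $o_i$ the center of $O_i$. For $2\le i\le n$, choose coordinates in which $o_{i-1},o_i$ lie on a horizontal line and $a_{i-1}$ is on or above that line. Let $q_{i-1}^{\rightarrow}$ (resp. $q_i^{\leftarrow}$) be the point of the upper boundary of $O_{i-1}$ (resp. $O_i$) farthest from the line $o_{i-1}o_i$. Let $Q_{i-1}^{\rightarrow}$ be the upper arc of the boundary of $O_{i-1}$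 between $q_{i-1}^{\rightarrow}$ and $a_{i-1}$, and $Q_i^{\leftarrow}$ the upper arc of the boundary of $O_i$ between $q_i^{\leftarrow}$ and $a_{i-1}$. $Q_{i-1}^{\rightarrow}$ is colored red if it lies inside $O_i$ and green otherwise; $Q_i^{\leftarrow}$ is red if it lies inside $O_{i-1}$ and green otherwise. Let $\mathcal{P}_i$ be the path from $q_{i-1}^{\rightarrow}$ to $q_i^{\leftarrow}$ formed by $Q_{i-1}^{\rightarrow}$ and $Q_i^{\leftarrow}$. $H_i$ (resp. $V_i$) is the horizontal (resp. vertical) distance traveled along $\mathcal{P}_i$, green arcs contributing positively and red arcs negatively. *)

theory Defs
  imports "HOL-Analysis.Analysis"
begin

text \<open>A chain of n disks is given by
  centres c i, radii r i (i = 1..n) and the labelled common boundary points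
  a i, b i of the consecutive disks O_i, O_(i+1) (i = 1..n-1).\<close>

definition cross2 :: "complex \<Rightarrow> complex \<Rightarrow> real" where
  "cross2 u v = Im (cnj u * v)"

definition arcC :: "(nat \<Rightarrow> complex) \<Rightarrow> (nat \<Rightarrow> real) \<Rightarrow> nat \<Rightarrow> nat \<Rightarrow> complex set" where
  "arcC c r i j = sphere (c i) (r i) \<inter> cball (c j) (r j)"

definition is_chain ::
  "nat \<Rightarrow> (nat \<Rightarrow> complex) \<Rightarrow> (nat \<Rightarrow> real) \<Rightarrow> (nat \<Rightarrow> complex) \<Rightarrow> (nat \<Rightarrow> complex) \<Rightarrow> bool" where
  "is_chain n c r a b \<longleftrightarrow>
     1 \<le> n \<and>
     (\<forall>i\<in>{1..n}. 0 < r i) \<and>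
     (\<forall>i\<in>{1..n}. \<forall>j\<in>{1..n}. i \<noteq> j \<longrightarrow> cball (c i) (r i) \<noteq> cball (c j) (r j)) \<and>
     (\<forall>i. 1 \<le> i \<and> i < n \<longrightarrow> sphere (c i) (r i) \<inter> sphere (c (Suc i)) (r (Suc i)) = {a i, b i}) \<and>
     ((\<forall>i. 1 \<le> i \<and> i < n \<longrightarrow> cross2 (c (Suc i) - c i) (a i - c i) \<ge> 0) \<or>
      (\<forall>i. 1 \<le> i \<and> i < n \<longrightarrow> cross2 (c (Suc i) - c i) (a i - c i) \<le> 0)) \<and>
     (\<forall>i. 2 \<le> i \<and> i + 1 \<le> n \<longrightarrow>
        arcC c r i (i - 1) \<inter> arcC c r i (Suc i) \<subseteq> {a (i - 1), b (i - 1), a i, b i})"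

text \<open>Coordinates for the pair (O_(i-1), O_i): horizontal unit vector u from o_(i-1)
  towards o_i, upward unit normal nv chosen so that a_(i-1) is on or above the line.\<close>
definition hdir :: "(nat \<Rightarrow> complex) \<Rightarrow> nat \<Rightarrow> complex" where
  "hdir c i = (c i - c (i - 1)) / of_real (cmod (c i - c (i - 1)))"

definition vdir :: "(nat \<Rightarrow> complex) \<Rightarrow> (nat \<Rightarrow> complex) \<Rightarrow> nat \<Rightarrow> complex" where
  "vdir c a i = (if cross2 (hdir c i) (a (i - 1) - c (i - 1)) \<ge> 0
                 then \<i> * hdir c i else - (\<i> * hdir c i))"

text \<open>The upper arc of the circle (centre o, radius \<rho>) between its topmost point
  o + \<rho> nv and the point p (p on the upper half).\<close>
definition upper_arc :: "complex \<Rightarrow> real \<Rightarrow> complex \<Rightarrow> complex \<Rightarrow> complex \<Rightarrow> complex set" where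
  "upper_arc ctr \<rho> u nv p = {z. cmod (z - ctr) = \<rho> \<and> nv \<bullet> (z - ctr) \<ge> 0 \<and>
      min (u \<bullet> (p - ctr)) 0 \<le> u \<bullet> (z - ctr) \<and> u \<bullet> (z - ctr) \<le> max (u \<bullet> (p - ctr)) 0}"

definition Qright :: "(nat \<Rightarrow> complex) \<Rightarrow> (nat \<Rightarrow> real) \<Rightarrow> (nat \<Rightarrow> complex) \<Rightarrow> nat \<Rightarrow> complex set" where
  "Qright c r a i = upper_arc (c (i - 1)) (r (i - 1)) (hdir c i) (vdir c a i) (a (i - 1))"

definition Qleft :: "(nat \<Rightarrow> complex) \<Rightarrow> (nat \<Rightarrow> real) \<Rightarrow> (nat \<Rightarrow> complex) \<Rightarrow> nat \<Rightarrow> complex set" where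
  "Qleft c r a i = upper_arc (c i) (r i) (hdir c i) (vdir c a i) (a (i - 1))"

text \<open>Colour signs: red (inside the other disk) gives -1, green gives +1.\<close>
definition sgn_right :: "(nat \<Rightarrow> complex) \<Rightarrow> (nat \<Rightarrow> real) \<Rightarrow> (nat \<Rightarrow> complex) \<Rightarrow> nat \<Rightarrow> real" where
  "sgn_right c r a i = (if Qright c r a i \<subseteq> cball (c i) (r i) then -1 else 1)"

definition sgn_left :: "(nat \<Rightarrow> complex) \<Rightarrow> (nat \<Rightarrow> real) \<Rightarrow> (nat \<Rightarrow> complex) \<Rightarrow> nat \<Rightarrow> real" where
  "sgn_left c r a i = (if Qleft c r a i \<subseteq> cball (c (i - 1)) (r (i - 1)) then -1 else 1)"

definition q_right :: "(nat \<Rightarrow> complex) \<Rightarrow> (nat \<Rightarrow> real) \<Rightarrow> (nat \<Rightarrow> complex) \<Rightarrow> nat \<Rightarrow> complex" where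
  "q_right c r a i = c (i - 1) + of_real (r (i - 1)) * vdir c a i"

definition q_left :: "(nat \<Rightarrow> complex) \<Rightarrow> (nat \<Rightarrow> real) \<Rightarrow> (nat \<Rightarrow> complex) \<Rightarrow> nat \<Rightarrow> complex" where
  "q_left c r a i = c i + of_real (r i) * vdir c a i"

text \<open>Each arc is monotone in both coordinates, so the horizontal (vertical) distance
  travelled along it is the horizontal (vertical) distance between its endpoints.\<close>
definition Hval :: "(nat \<Rightarrow> complex) \<Rightarrow> (nat \<Rightarrow> real) \<Rightarrow> (nat \<Rightarrow> complex) \<Rightarrow> nat \<Rightarrow> real" where
  "Hval c r a i =
     sgn_right c r a i * \<bar>hdir c i \<bullet> (q_right c r a i - a (i - 1))\<bar> +
     sgn_left c r a i * \<bar>hdir c i \<bullet> (q_left c r a i - a (i - 1))\<bar>"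

definition Vval :: "(nat \<Rightarrow> complex) \<Rightarrow> (nat \<Rightarrow> real) \<Rightarrow> (nat \<Rightarrow> complex) \<Rightarrow> nat \<Rightarrow> real" where
  "Vval c r a i =
     sgn_right c r a i * \<bar>vdir c a i \<bullet> (q_right c r a i - a (i - 1))\<bar> +
     sgn_left c r a i * \<bar>vdir c a i \<bullet> (q_left c r a i - a (i - 1))\<bar>"

definition phi_const :: real where
  "phi_const = 3 / sqrt 5 * (1 - 1.8 / 1.998)"

definition Phi :: "(nat \<Rightarrow> complex) \<Rightarrow> (nat \<Rightarrow> real) \<Rightarrow> (nat \<Rightarrow> complex) \<Rightarrow> nat \<Rightarrow> real" where
  "Phi c r a m = phi_const * (r m - r 1)
      - phi_const / 3 * (\<Sum>i = 2..m. 2 * Hval c r a i + Vval c r a i)"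

end

theory Submission
  imports Defs
begin

lemma final_ineq:
  fixes x y d R r sR sL :: real
  assumes xy: "x^2 + y^2 = R^2" and dxy: "(d-x)^2 + y^2 = r^2" and y: "y \<ge> 0"
    and R: "R > 0" and r: "r > 0" and d: "d > 0"
    and sR: "sR = 1 \<or> sR = -1" and sL: "sL = 1 \<or> sL = -1"
    and redR: "sR = -1 \<Longrightarrow> R^2 + d^2 \<le> r^2"
    and redL: "sL = -1 \<Longrightarrow> d^2 + r^2 \<le> R^2"
  shows "3 * (r - R) \<le> 2 * (sR * \<bar>-x\<bar> + sL * \<bar>d - x\<bar>) + (sR * \<bar>R - y\<bar> + sL * \<bar>r - y\<bar>)"
proof -
  have x2: "0 \<le> x^2" "0 \<le> (d-x)^2" by auto
  have yR: "y \<le> R" by (rule power2_le_imp_le) (use xy x2 R in linarith)+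
  have yr: "y \<le> r" by (rule power2_le_imp_le) (use dxy x2 r in linarith)+
  have y2: "0 \<le> y^2" by simp
  have "x^2 \<le> R^2" "(d-x)^2 \<le> r^2" using xy dxy y2 by linarith+
  hence "\<bar>x\<bar>^2 \<le> R^2" "\<bar>d-x\<bar>^2 \<le> r^2" by simp_all
  hence xR: "\<bar>x\<bar> \<le> R" and dxr: "\<bar>d - x\<bar> \<le> r"
    using power2_le_imp_le R r less_imp_le by blast+
  define A where "A = \<bar>d - x\<bar>"
  define B where "B = \<bar>x\<bar>"
  have A0: "A \<ge> 0" and B0: "B \<ge> 0" by (auto simp: A_def B_def)
  have AB: "A^2 - B^2 = r^2 - R^2" using xy dxy by (simp add: A_def B_def power2_abs)
  have Ar: "A \<le> r" using dxr A_def by simp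
  have BR: "B \<le> R" using xR B_def by simp
  have abs1: "\<bar>R - y\<bar> = R - y" "\<bar>r - y\<bar> = r - y" "\<bar>-x\<bar> = B"
    using yR yr B_def by auto
  have dAB: "d \<le> A + B" unfolding A_def B_def by linarith
  have rRd: "r \<le> R + d"
  proof (rule power2_le_imp_le)
    have "r^2 = d^2 - 2*d*x + (x^2 + y^2)" using dxy by (simp add: power2_eq_square algebra_simps)
    also have "\<dots> = d^2 - 2*d*x + R^2" using xy by simp
    also have "\<dots> \<le> d^2 + 2*d*R + R^2"
    proof -
      have "- x \<le> R" using xR by linarith
      hence "d * (-x) \<le> d * R" using d by (intro mult_left_mono) auto
      thus ?thesis by (simp add: mult.commute)
    qed
    also have "\<dots> = (R + d)^2" by (simp add: power2_eq_square algebra_simps)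
    finally show "r^2 \<le> (R + d)^2" .
    show "0 \<le> R + d" using R d by simp
  qed
  consider "sR = 1" "sL = 1" | "sR = -1" "sL = 1" | "sR = 1" "sL = -1" | "sR = -1" "sL = -1"
    using sR sL by blast
  then show ?thesis
  proof cases
    case 1
    then show ?thesis using abs1 dAB rRd yR unfolding A_def[symmetric] by simp
  next
    case 2
    have "0 \<le> d^2" by simp
    hence "R^2 \<le> r^2" using redR[OF 2(1)] by linarith
    hence rR: "R \<le> r" using power2_le_imp_le r by (meson less_imp_le)
    have "A - B \<ge> r - R"
    proof (cases "A + B = 0")
      case True
      hence "A = 0" "B = 0" using A0 B0 by auto
      hence "r^2 \<le> R^2" using AB by simp
      hence "r \<le> R" by (rule power2_le_imp_le) (use R in simp)
      then show ?thesis using rR \<open>A = 0\<close> \<open>B = 0\<close> by simp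
    next
      case False
      hence pos: "A + B > 0" using A0 B0 by linarith
      have "(r - R) * (A + B) \<le> (r - R) * (r + R)" using rR Ar BR by (simp add: mult_left_mono)
      also have "\<dots> = (A - B) * (A + B)" using AB by (simp add: power2_eq_square algebra_simps)
      finally show ?thesis using pos by (simp add: mult_le_cancel_right)
    qed
    then show ?thesis using 2 abs1 unfolding A_def[symmetric] by simp
  next
    case 3
    have "0 \<le> d^2" by simp
    hence rR2: "r^2 \<le> R^2" using redL[OF 3(2)] by linarith
    have rR: "r \<le> R" by (rule power2_le_imp_le) (use rR2 R in simp)+
    have "A \<le> B" by (rule power2_le_imp_le) (use AB rR2 B0 in simp)+
    then show ?thesis using 3 abs1 rR unfolding A_def[symmetric] by simp
  next
    case 4
    have "0 < d^2" using d by simp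
    have False using \<open>0 < d^2\<close> redR[OF 4(1)] redL[OF 4(2)] by linarith
    then show ?thesis ..
  qed
qed

lemma orth_decomp:
  fixes u nv z :: complex
  assumes "cmod u = 1" "nv = \<i>*u \<or> nv = -(\<i>*u)"
  shows "(cmod z)^2 = (u \<bullet> z)^2 + (nv \<bullet> z)^2"
proof -
  have u1: "Re u ^2 + Im u ^2 = 1" using assms(1) by (metis cmod_power2 power_one)
  have "(u \<bullet> z)^2 + (nv \<bullet> z)^2 = (Re u ^2 + Im u ^2) * (Re z ^2 + Im z ^2)"
    using assms(2) by (auto simp: inner_complex_def power2_eq_square algebra_simps)
  thus ?thesis using u1 by (simp add: cmod_power2)
qed

lemma inner_ofreal: "(u::complex) \<bullet> (of_real t * v) = t * (u \<bullet> v)"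
  by (simp add: inner_complex_def algebra_simps)

lemma orth_un:
  fixes u nv :: complex
  assumes "nv = \<i>*u \<or> nv = -(\<i>*u)"
  shows "u \<bullet> nv = 0" "nv \<bullet> u = 0"
  using assms by (auto simp: inner_complex_def algebra_simps)

lemma unit_inner: "cmod (u::complex) = 1 \<Longrightarrow> u \<bullet> u = 1"
  by (metis inner_real_def norm_eq_sqrt_inner real_sqrt_eq_1_iff inner_commute dot_square_norm power_one)

theorem proposition1:
  fixes n :: nat and c :: "nat \<Rightarrow> complex" and r :: "nat \<Rightarrow> real"
    and a b :: "nat \<Rightarrow> complex"
  assumes "is_chain n c r a b" and "2 \<le> n"
  shows "Phi c r a n \<le> Phi c r a (n - 1)"
proof -
  obtain m where n: "n = Suc m" and m1: "1 \<le> m" using assms(2)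
    by (metis One_nat_def Suc_le_D Suc_le_mono numeral_2_eq_2)
  note ch = assms(1)[unfolded is_chain_def]
  have rpos: "0 < r m" "0 < r n" using ch m1 n by auto
  have sph: "sphere (c m) (r m) \<inter> sphere (c n) (r n) = {a m, b m}"
    using ch m1 n by auto
  hence am: "a m \<in> sphere (c m) (r m)" "a m \<in> sphere (c n) (r n)" by auto
  define R where "R = r m"
  define rr where "rr = r n"
  define D where "D = c n - c m"
  define w where "w = a m - c m"
  have cw: "cmod w = R" using am(1) by (simp add: w_def R_def dist_norm norm_minus_commute)
  have cwD: "cmod (w - D) = rr" using am(2) by (simp add: w_def D_def rr_def dist_norm norm_minus_commute)
  have D0: "D \<noteq> 0"
  proof
    assume "D = 0"
    hence "c n = c m" by (simp add: D_def)
    hence "r m = r n" using am by (simp add: dist_norm)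
    hence "cball (c m) (r m) = cball (c n) (r n)" using \<open>c n = c m\<close> by simp
    moreover have "cball (c m) (r m) \<noteq> cball (c n) (r n)" using ch m1 n by auto
    ultimately show False by simp
  qed
  define d where "d = cmod D"
  have dpos: "d > 0" using D0 by (simp add: d_def)
  define u where "u = hdir c n"
  have u_eq: "u = D / of_real d" by (simp add: u_def hdir_def n D_def d_def)
  have cu: "cmod u = 1" using D0 by (simp add: u_eq d_def norm_divide)
  have Du: "D = of_real d * u" using dpos by (simp add: u_eq)
  define nv where "nv = vdir c a n"
  have cross: "(\<i>*u) \<bullet> z = cross2 u z" for z
    by (simp add: inner_complex_def cross2_def algebra_simps)
  have nv_or: "nv = \<i>*u \<or> nv = -(\<i>*u)" by (simp add: nv_def vdir_def u_def)
  have u_n: "hdir c (Suc m) = u" by (simp add: u_def n)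
  define x where "x = u \<bullet> w"
  define y where "y = nv \<bullet> w"
  have y0: "y \<ge> 0"
  proof (cases "cross2 u w \<ge> 0")
    case True
    hence "nv = \<i>*u" using u_n by (simp add: nv_def vdir_def n w_def)
    thus ?thesis using True cross by (simp add: y_def)
  next
    case False
    hence "nv = -(\<i>*u)" using u_n by (simp add: nv_def vdir_def n w_def)
    thus ?thesis using False cross[of w] by (simp add: y_def)
  qed
  have un: "u \<bullet> nv = 0" "nv \<bullet> u = 0" using orth_un[OF nv_or] by auto
  have cnv: "cmod nv = 1" using nv_or cu by (auto simp: norm_mult)
  have uu: "u \<bullet> u = 1" and nn: "nv \<bullet> nv = 1" using unit_inner cu cnv by auto
  have uD: "u \<bullet> D = d" using uu by (simp add: Du inner_ofreal)
  have nD: "nv \<bullet> D = 0" using un by (simp add: Du inner_ofreal)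
  have xy: "x^2 + y^2 = R^2" using orth_decomp[OF cu nv_or, of w] cw by (simp add: x_def y_def)
  have dxy: "(d - x)^2 + y^2 = rr^2"
  proof -
    have "(cmod (w - D))^2 = (u \<bullet> (w - D))^2 + (nv \<bullet> (w - D))^2"
      by (rule orth_decomp[OF cu nv_or])
    also have "u \<bullet> (w - D) = x - d" by (simp add: inner_diff_right x_def uD)
    also have "nv \<bullet> (w - D) = y" by (simp add: inner_diff_right y_def nD)
    finally show ?thesis using cwD by (simp add: power2_commute)
  qed
  have qr: "q_right c r a n - a (n - 1) = of_real R * nv - w"
    by (simp add: q_right_def n R_def nv_def w_def)
  have ql: "q_left c r a n - a (n - 1) = D + of_real rr * nv - w"
    by (simp add: q_left_def n rr_def nv_def w_def D_def)
  have H: "Hval c r a n = sgn_right c r a n * \<bar>-x\<bar> + sgn_left c r a n * \<bar>d - x\<bar>"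
    unfolding Hval_def u_def[symmetric] qr ql
    by (simp add: inner_diff_right inner_add_right inner_ofreal un uD x_def)
  have V: "Vval c r a n = sgn_right c r a n * \<bar>R - y\<bar> + sgn_left c r a n * \<bar>rr - y\<bar>"
    unfolding Vval_def nv_def[symmetric] qr ql
    by (simp add: inner_diff_right inner_add_right inner_ofreal nn nD y_def)
  have sR: "sgn_right c r a n = 1 \<or> sgn_right c r a n = -1" by (simp add: sgn_right_def)
  have sL: "sgn_left c r a n = 1 \<or> sgn_left c r a n = -1" by (simp add: sgn_left_def)
  have redR: "R^2 + d^2 \<le> rr^2" if "sgn_right c r a n = -1"
  proof -
    have sub: "Qright c r a n \<subseteq> cball (c n) (r n)" using that
      by (simp add: sgn_right_def split: if_splits)
    have "q_right c r a n \<in> Qright c r a n"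
      using rpos cnv un nn
      by (simp add: Qright_def upper_arc_def q_right_def n R_def nv_def u_def norm_mult inner_ofreal)
    hence "cmod (q_right c r a n - c n) \<le> rr" using sub by (auto simp: rr_def dist_norm norm_minus_commute)
    moreover have "q_right c r a n - c n = of_real R * nv - D"
      by (simp add: q_right_def n R_def nv_def D_def)
    ultimately have le: "cmod (of_real R * nv - D) \<le> rr" by simp
    have "(cmod (of_real R * nv - D))^2 = (u \<bullet> (of_real R * nv - D))^2 + (nv \<bullet> (of_real R * nv - D))^2"
      by (rule orth_decomp[OF cu nv_or])
    also have "\<dots> = d^2 + R^2"
      by (simp add: inner_diff_right inner_ofreal un nn uD nD)
    finally have "(cmod (of_real R * nv - D))^2 = d^2 + R^2" .
    moreover have "(cmod (of_real R * nv - D))^2 \<le> rr^2" using le by (simp add: power_mono)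
    ultimately show ?thesis by simp
  qed
  have redL: "d^2 + rr^2 \<le> R^2" if "sgn_left c r a n = -1"
  proof -
    have sub: "Qleft c r a n \<subseteq> cball (c m) (r m)" using that
      by (simp add: sgn_left_def n split: if_splits)
    have "q_left c r a n \<in> Qleft c r a n"
      using rpos cnv un nn
      by (simp add: Qleft_def upper_arc_def q_left_def n rr_def nv_def u_def norm_mult inner_ofreal)
    hence "cmod (q_left c r a n - c m) \<le> R" using sub by (auto simp: R_def dist_norm norm_minus_commute)
    moreover have "q_left c r a n - c m = D + of_real rr * nv"
      by (simp add: q_left_def n rr_def nv_def D_def)
    ultimately have le: "cmod (D + of_real rr * nv) \<le> R" by simp
    have "(cmod (D + of_real rr * nv))^2 = (u \<bullet> (D + of_real rr * nv))^2 + (nv \<bullet> (D + of_real rr * nv))^2"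
      by (rule orth_decomp[OF cu nv_or])
    also have "\<dots> = d^2 + rr^2"
      by (simp add: inner_add_right inner_ofreal un nn uD nD)
    finally have "(cmod (D + of_real rr * nv))^2 = d^2 + rr^2" .
    moreover have "(cmod (D + of_real rr * nv))^2 \<le> R^2" using le by (simp add: power_mono)
    ultimately show ?thesis by simp
  qed
  have key: "3 * (rr - R) \<le> 2 * Hval c r a n + Vval c r a n"
    unfolding H V
    by (rule final_ineq[OF xy dxy y0 _ _ dpos sR sL redR redL])
       (use rpos in \<open>simp_all add: R_def rr_def\<close>)
  have phi: "phi_const > 0" by (simp add: phi_const_def)
  have sum: "(\<Sum>i = 2..n. 2 * Hval c r a i + Vval c r a i)
      = (\<Sum>i = 2..m. 2 * Hval c r a i + Vval c r a i) + (2 * Hval c r a n + Vval c r a n)"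
    using m1 by (simp add: n sum.cl_ivl_Suc)
  have "phi_const * (rr - R) \<le> phi_const / 3 * (2 * Hval c r a n + Vval c r a n)"
  proof -
    have "phi_const * (3 * (rr - R)) \<le> phi_const * (2 * Hval c r a n + Vval c r a n)"
      using key phi by (intro mult_left_mono) auto
    thus ?thesis by (simp add: algebra_simps)
  qed
  thus ?thesis unfolding Phi_def sum using n by (simp add: R_def rr_def algebra_simps)
qed

end
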